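(* Let $G$ be a group with a regular gliding system. For any set $\mathcal{D}\subset G$, the glide complex $X_{\mathcal{D}}$ is nonpositively curved if and only if $\mathcal{D}$ satisfies the cube condition. In particular, $X_G$ is nonpositively curved.
   Context: Gliding system $(\mathcal{G},\mathcal{I})$ in $G$: $\mathcal{G}\subset G\setminus\{1\}$ closed under inversion (glides), $\mathcal{I}\subset\mathcal{G}\times\mathcal{G}$ (independence) with $(s^{-1},t),(t,s)\in\mathcal{I}$ and $st=ts\ne1$ whenever $(s,t)\in\mathcal{I}$. Pre-cubic set: finite set $S$ of pairwise independent glides, $[S]=\prod_{s\in S}s$; cubic: pre-cubic with $[T_1]\ne[T_2]$ for distinct $T_1,T_2\subset S$. The gliding system is regular if every pre-cubic set is cubic. Glide complex $X_G$: cubed complex with one $k$-cube for each equivalence class of based cubes $(A,S)$ ($A\in G$, $S$ cubic of size $k$) under $(A,S)\sim([T]A,(S\setminus T)\cup\{t^{-1}:t\in T\})$, $T\subset S$; vertices $[T]A$, faces the cubes of $(A,S')$, $S'\subset S$. $X_{\mathcal{D}}$: subcomplex of cubes all of whose vertices lie in $\mathcal{D}$. Cube condition on $\mathcal{D}$: for every $A\in\mathcal{D}$ and pairwise independent glides $s_1,s_2,s_3$ with $s_iA\in\mathcal{D}$ and $s_is_jA\in\mathcal{D}$ for all $i\ne j$, one has $s_1s_2s_3A\in\mathcal{D}$. Nonpositively curved: links of $0$-cells are simplicial flag complexes. *)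

theory Defs
  imports "HOL-Algebra.Group"
begin

definition gliding_system :: "('a,'b) monoid_scheme \<Rightarrow> 'a set \<Rightarrow> ('a \<times> 'a) set \<Rightarrow> bool" where
  "gliding_system G Gl Ind \<longleftrightarrow>
     group G \<and> Gl \<subseteq> carrier G - {\<one>\<^bsub>G\<^esub>} \<and> (\<forall>s\<in>Gl. inv\<^bsub>G\<^esub> s \<in> Gl) \<and> Ind \<subseteq> Gl \<times> Gl \<and>
     (\<forall>s t. (s,t) \<in> Ind \<longrightarrow> (inv\<^bsub>G\<^esub> s, t) \<in> Ind \<and> (t, s) \<in> Ind \<and>
              s \<otimes>\<^bsub>G\<^esub> t = t \<otimes>\<^bsub>G\<^esub> s \<and> s \<otimes>\<^bsub>G\<^esub> t \<noteq> \<one>\<^bsub>G\<^esub>)"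

text \<open>[S]: product of a finite set of pairwise commuting elements (in any enumeration order).\<close>
definition gprod :: "('a,'b) monoid_scheme \<Rightarrow> 'a set \<Rightarrow> 'a" where
  "gprod G S = foldr (\<lambda>x y. x \<otimes>\<^bsub>G\<^esub> y) (SOME xs. distinct xs \<and> set xs = S) \<one>\<^bsub>G\<^esub>"

definition precubic :: "'a set \<Rightarrow> ('a \<times> 'a) set \<Rightarrow> 'a set \<Rightarrow> bool" where
  "precubic Gl Ind S \<longleftrightarrow> finite S \<and> S \<subseteq> Gl \<and> (\<forall>s\<in>S. \<forall>t\<in>S. s \<noteq> t \<longrightarrow> (s,t) \<in> Ind)"

definition cubic :: "('a,'b) monoid_scheme \<Rightarrow> 'a set \<Rightarrow> ('a \<times> 'a) set \<Rightarrow> 'a set \<Rightarrow> bool" where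
  "cubic G Gl Ind S \<longleftrightarrow> precubic Gl Ind S \<and>
     (\<forall>T1 T2. T1 \<subseteq> S \<longrightarrow> T2 \<subseteq> S \<longrightarrow> T1 \<noteq> T2 \<longrightarrow> gprod G T1 \<noteq> gprod G T2)"

definition regular_gliding :: "('a,'b) monoid_scheme \<Rightarrow> 'a set \<Rightarrow> ('a \<times> 'a) set \<Rightarrow> bool" where
  "regular_gliding G Gl Ind \<longleftrightarrow> (\<forall>S. precubic Gl Ind S \<longrightarrow> cubic G Gl Ind S)"

text \<open>Based cube (A,S) whose cube lies in X_D (all vertices [T]A in D).\<close>
definition based_cube_in :: "('a,'b) monoid_scheme \<Rightarrow> 'a set \<Rightarrow> ('a \<times> 'a) set \<Rightarrow> 'a set \<Rightarrow> 'a \<Rightarrow> 'a set \<Rightarrow> bool" where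
  "based_cube_in G Gl Ind D A S \<longleftrightarrow> A \<in> carrier G \<and> cubic G Gl Ind S \<and>
     (\<forall>T. T \<subseteq> S \<longrightarrow> gprod G T \<otimes>\<^bsub>G\<^esub> A \<in> D)"

text \<open>An abstract cell structure (link): vertex set, cells, vertex map, number of corners of each cell.\<close>
definition simplicial_flag :: "'v set \<Rightarrow> 'c set \<Rightarrow> ('c \<Rightarrow> 'v set) \<Rightarrow> ('c \<Rightarrow> nat) \<Rightarrow> bool" where
  "simplicial_flag V C vo nv \<longleftrightarrow>
     inj_on vo C \<and> (\<forall>c\<in>C. vo c \<subseteq> V \<and> card (vo c) = nv c) \<and>
     (\<forall>F. finite F \<and> F \<noteq> {} \<and> F \<subseteq> V \<and> (\<forall>u\<in>F. \<forall>w\<in>F. u \<noteq> w \<longrightarrow> {u,w} \<in> vo ` C)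
          \<longrightarrow> F \<in> vo ` C)"

text \<open>Link of the vertex A in X_D: one simplex per corner at A of a cube of X_D, i.e. per based
  cube (A,S) in X_D with S nonempty; its vertices are the corners (A,{s}) of the edges at A.\<close>
definition link_cells :: "('a,'b) monoid_scheme \<Rightarrow> 'a set \<Rightarrow> ('a \<times> 'a) set \<Rightarrow> 'a set \<Rightarrow> 'a \<Rightarrow> ('a \<times> 'a set) set" where
  "link_cells G Gl Ind D A = {(A,S) | S. S \<noteq> {} \<and> based_cube_in G Gl Ind D A S}"

definition link_verts :: "('a,'b) monoid_scheme \<Rightarrow> 'a set \<Rightarrow> ('a \<times> 'a) set \<Rightarrow> 'a set \<Rightarrow> 'a \<Rightarrow> ('a \<times> 'a set) set" where
  "link_verts G Gl Ind D A = {(A,{s}) | s. based_cube_in G Gl Ind D A {s}}"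

definition nonpositively_curved :: "('a,'b) monoid_scheme \<Rightarrow> 'a set \<Rightarrow> ('a \<times> 'a) set \<Rightarrow> 'a set \<Rightarrow> bool" where
  "nonpositively_curved G Gl Ind D \<longleftrightarrow>
     (\<forall>A\<in>D. simplicial_flag (link_verts G Gl Ind D A) (link_cells G Gl Ind D A)
               (\<lambda>(B,S). (\<lambda>s. (B,{s})) ` S) (\<lambda>(B,S). card S))"

definition cube_condition :: "('a,'b) monoid_scheme \<Rightarrow> 'a set \<Rightarrow> ('a \<times> 'a) set \<Rightarrow> 'a set \<Rightarrow> bool" where
  "cube_condition G Gl Ind D \<longleftrightarrow>
     (\<forall>A\<in>D. \<forall>s1 s2 s3.
        (s1,s2) \<in> Ind \<and> (s1,s3) \<in> Ind \<and> (s2,s3) \<in> Ind \<and>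
        s1 \<otimes>\<^bsub>G\<^esub> A \<in> D \<and> s2 \<otimes>\<^bsub>G\<^esub> A \<in> D \<and> s3 \<otimes>\<^bsub>G\<^esub> A \<in> D \<and>
        s1 \<otimes>\<^bsub>G\<^esub> s2 \<otimes>\<^bsub>G\<^esub> A \<in> D \<and> s1 \<otimes>\<^bsub>G\<^esub> s3 \<otimes>\<^bsub>G\<^esub> A \<in> D \<and> s2 \<otimes>\<^bsub>G\<^esub> s3 \<otimes>\<^bsub>G\<^esub> A \<in> D
        \<longrightarrow> s1 \<otimes>\<^bsub>G\<^esub> s2 \<otimes>\<^bsub>G\<^esub> s3 \<otimes>\<^bsub>G\<^esub> A \<in> D)"

end

theory Submission
  imports Defs
begin

definition commset :: "('a,'b) monoid_scheme \<Rightarrow> 'a set \<Rightarrow> bool" where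
  "commset G S \<longleftrightarrow> (\<forall>x\<in>S. \<forall>y\<in>S. x \<otimes>\<^bsub>G\<^esub> y = y \<otimes>\<^bsub>G\<^esub> x)"

lemma commsetD: "commset G S \<Longrightarrow> x \<in> S \<Longrightarrow> y \<in> S \<Longrightarrow> x \<otimes>\<^bsub>G\<^esub> y = y \<otimes>\<^bsub>G\<^esub> x"
  unfolding commset_def by blast

lemma commset_mono: "commset G S \<Longrightarrow> T \<subseteq> S \<Longrightarrow> commset G T"
  unfolding commset_def by blast

context monoid
begin

lemma foldr_closed: "set xs \<subseteq> carrier G \<Longrightarrow> foldr (\<lambda>x y. x \<otimes> y) xs \<one> \<in> carrier G"
  by (induction xs) auto

lemma foldr_pull:
  "a \<in> set ys \<Longrightarrow> set ys \<subseteq> carrier G \<Longrightarrow> commset G (set ys) \<Longrightarrow>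
   foldr (\<lambda>x y. x \<otimes> y) ys \<one> = a \<otimes> foldr (\<lambda>x y. x \<otimes> y) (remove1 a ys) \<one>"
proof (induction ys)
  case Nil then show ?case by simp
next
  case (Cons b ys)
  show ?case
  proof (cases "b = a")
    case True then show ?thesis by simp
  next
    case False
    have a: "a \<in> set ys" using Cons.prems(1) False by simp
    have cs: "commset G (set ys)" using Cons.prems(3) by (rule commset_mono) auto
    have IH: "foldr (\<lambda>x y. x \<otimes> y) ys \<one> = a \<otimes> foldr (\<lambda>x y. x \<otimes> y) (remove1 a ys) \<one>"
      using Cons.IH[OF a _ cs] Cons.prems(2) by simp
    have c: "foldr (\<lambda>x y. x \<otimes> y) (remove1 a ys) \<one> \<in> carrier G"
      using Cons.prems by (intro foldr_closed) (meson notin_set_remove1 subset_code(1) list.set_intros(2))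
    have ab: "a \<otimes> b = b \<otimes> a" using Cons.prems(1,3) by (intro commsetD[of G "set (b#ys)"]) auto
    have "a \<in> carrier G" "b \<in> carrier G" using Cons.prems by auto
    then have "b \<otimes> (a \<otimes> foldr (\<lambda>x y. x \<otimes> y) (remove1 a ys) \<one>)
        = a \<otimes> (b \<otimes> foldr (\<lambda>x y. x \<otimes> y) (remove1 a ys) \<one>)"
      using c ab by (metis m_assoc)
    then show ?thesis using False IH by simp
  qed
qed

lemma foldr_perm:
  "distinct xs \<Longrightarrow> distinct ys \<Longrightarrow> set xs = set ys \<Longrightarrow> set xs \<subseteq> carrier G \<Longrightarrow>
   commset G (set xs) \<Longrightarrow>
   foldr (\<lambda>x y. x \<otimes> y) xs \<one> = foldr (\<lambda>x y. x \<otimes> y) ys \<one>"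
proof (induction xs arbitrary: ys)
  case Nil then show ?case by simp
next
  case (Cons a xs)
  have "foldr (\<lambda>x y. x \<otimes> y) ys \<one> = a \<otimes> foldr (\<lambda>x y. x \<otimes> y) (remove1 a ys) \<one>"
    using Cons.prems by (intro foldr_pull) auto
  moreover have "foldr (\<lambda>x y. x \<otimes> y) xs \<one> = foldr (\<lambda>x y. x \<otimes> y) (remove1 a ys) \<one>"
  proof (rule Cons.IH)
    show "distinct xs" using Cons.prems by simp
    show "distinct (remove1 a ys)" using Cons.prems by simp
    show "set xs = set (remove1 a ys)" using Cons.prems by (auto simp: set_remove1_eq)
    show "set xs \<subseteq> carrier G" using Cons.prems by auto
    show "commset G (set xs)" using Cons.prems(5) by (rule commset_mono) auto
  qed
  ultimately show ?case by simp
qed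

lemma gprod_empty: "gprod G {} = \<one>"
proof -
  have "(SOME xs. distinct xs \<and> set xs = {}) = ([]::'a list)"
    by (rule some_equality) auto
  then show ?thesis unfolding gprod_def by simp
qed

lemma gprod_some:
  assumes "finite T"
  shows "distinct (SOME xs. distinct xs \<and> set xs = T) \<and> set (SOME xs. distinct xs \<and> set xs = T) = T"
proof -
  have ex: "\<exists>xs. distinct xs \<and> set xs = T" using assms(1) finite_distinct_list by blast
  show ?thesis using someI_ex[OF ex] .
qed

lemma gprod_eq_list:
  assumes "distinct xs" "finite T" "set xs = T" "T \<subseteq> carrier G" "\<forall>x\<in>T. \<forall>y\<in>T. x \<otimes> y = y \<otimes> x"
  shows "gprod G T = foldr (\<lambda>x y. x \<otimes> y) xs \<one>"
proof -
  define zs where "zs = (SOME xs. distinct xs \<and> set xs = T)"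
  have z: "distinct zs" "set zs = T" unfolding zs_def using gprod_some[OF assms(2)] by auto
  have "foldr (\<lambda>x y. x \<otimes> y) zs \<one> = foldr (\<lambda>x y. x \<otimes> y) xs \<one>"
  proof (rule foldr_perm[OF z(1) assms(1)])
    show "set zs = set xs" using z(2) assms(3) by simp
    show "set zs \<subseteq> carrier G" using z(2) assms(4) by simp
    show "commset G (set zs)" unfolding z(2) commset_def by (rule assms(5))
  qed
  then show ?thesis unfolding gprod_def zs_def[symmetric] .
qed

lemma gprod_closed:
  assumes "finite T" "T \<subseteq> carrier G"
  shows "gprod G T \<in> carrier G"
proof -
  define zs where "zs = (SOME xs. distinct xs \<and> set xs = T)"
  have z: "distinct zs" "set zs = T" unfolding zs_def using gprod_some[OF assms(1)] by auto
  show ?thesis unfolding gprod_def zs_def[symmetric] using z assms(2)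
    by (intro foldr_closed) simp
qed

lemma gprod_insert:
  assumes "finite T" "insert x T \<subseteq> carrier G" "x \<notin> T"
    "\<forall>a\<in>insert x T. \<forall>b\<in>insert x T. a \<otimes> b = b \<otimes> a"
  shows "gprod G (insert x T) = x \<otimes> gprod G T"
proof -
  obtain ys where ys: "distinct ys" "set ys = T" using assms(1) finite_distinct_list by blast
  have "gprod G (insert x T) = foldr (\<lambda>x y. x \<otimes> y) (x # ys) \<one>"
  proof (rule gprod_eq_list)
    show "distinct (x # ys)" using ys assms(3) by simp
    show "set (x # ys) = insert x T" using ys by simp
    show "finite (insert x T)" using assms(1) by simp
    show "insert x T \<subseteq> carrier G" by (rule assms(2))
    show "\<forall>a\<in>insert x T. \<forall>b\<in>insert x T. a \<otimes> b = b \<otimes> a" by (rule assms(4))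
  qed
  moreover have "gprod G T = foldr (\<lambda>x y. x \<otimes> y) ys \<one>"
  proof (rule gprod_eq_list[OF ys(1) assms(1) ys(2)])
    show "T \<subseteq> carrier G" using assms(2) by simp
    show "\<forall>a\<in>T. \<forall>b\<in>T. a \<otimes> b = b \<otimes> a" using assms(4) by (meson insertCI)
  qed
  ultimately show ?thesis by simp
qed

end

lemma gs_facts:
  assumes "gliding_system G Gl Ind"
  shows "group G" "Gl \<subseteq> carrier G - {\<one>\<^bsub>G\<^esub>}" "\<And>s. s\<in>Gl \<Longrightarrow> inv\<^bsub>G\<^esub> s \<in> Gl" "Ind \<subseteq> Gl \<times> Gl"
    "\<And>s t. (s,t) \<in> Ind \<Longrightarrow> (inv\<^bsub>G\<^esub> s, t) \<in> Ind"
    "\<And>s t. (s,t) \<in> Ind \<Longrightarrow> (t, s) \<in> Ind"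
    "\<And>s t. (s,t) \<in> Ind \<Longrightarrow> s \<otimes>\<^bsub>G\<^esub> t = t \<otimes>\<^bsub>G\<^esub> s"
    "\<And>s t. (s,t) \<in> Ind \<Longrightarrow> s \<otimes>\<^bsub>G\<^esub> t \<noteq> \<one>\<^bsub>G\<^esub>"
  using assms unfolding gliding_system_def by (simp_all only: simp_thms)

lemma ind_props:
  assumes gs: "gliding_system G Gl Ind" and st: "(s,t) \<in> Ind"
  shows "s \<noteq> t" "s \<in> Gl" "t \<in> Gl" "s \<in> carrier G" "t \<in> carrier G"
    "s \<otimes>\<^bsub>G\<^esub> t = t \<otimes>\<^bsub>G\<^esub> s" "(t,s) \<in> Ind"
proof -
  note f = gs_facts[OF gs]
  show sG: "s \<in> Gl" "t \<in> Gl" using f(4) st by auto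
  then show "s \<in> carrier G" "t \<in> carrier G" using f(2) by auto
  show "s \<otimes>\<^bsub>G\<^esub> t = t \<otimes>\<^bsub>G\<^esub> s" "(t,s) \<in> Ind" using f(6,7)[OF st] by auto
  show "s \<noteq> t"
  proof
    assume "s = t"
    then have "(inv\<^bsub>G\<^esub> s, s) \<in> Ind" using f(5) st by simp
    then have "inv\<^bsub>G\<^esub> s \<otimes>\<^bsub>G\<^esub> s \<noteq> \<one>\<^bsub>G\<^esub>" by (rule f(8))
    moreover have "inv\<^bsub>G\<^esub> s \<otimes>\<^bsub>G\<^esub> s = \<one>\<^bsub>G\<^esub>" using group.l_inv[OF f(1) \<open>s \<in> carrier G\<close>] .
    ultimately show False by simp
  qed
qed


lemma gprod_insert':
  assumes "group G" "finite T" "insert x T \<subseteq> carrier G" "x \<notin> T" "commset G (insert x T)"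
  shows "gprod G (insert x T) = x \<otimes>\<^bsub>G\<^esub> gprod G T"
proof -
  interpret group G by (rule assms(1))
  show ?thesis
  proof (rule gprod_insert)
    show "finite T" by (rule assms(2))
    show "insert x T \<subseteq> carrier G" by (rule assms(3))
    show "x \<notin> T" by (rule assms(4))
    show "\<forall>a\<in>insert x T. \<forall>b\<in>insert x T. a \<otimes>\<^bsub>G\<^esub> b = b \<otimes>\<^bsub>G\<^esub> a" using assms(5) unfolding commset_def .
  qed
qed

lemma gprod_single:
  assumes "group G" "s \<in> carrier G"
  shows "gprod G {s} = s"
proof -
  interpret group G by (rule assms(1))
  have "gprod G {s} = s \<otimes>\<^bsub>G\<^esub> gprod G {}"
    by (rule gprod_insert') (use assms in \<open>auto simp: commset_def\<close>)
  then show ?thesis using assms(2) by (simp add: gprod_empty)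
qed

lemma precubic_commset:
  assumes gs: "gliding_system G Gl Ind" and p: "precubic Gl Ind S"
  shows "commset G S"
  unfolding commset_def
proof (intro ballI)
  fix x y assume xy: "x \<in> S" "y \<in> S"
  show "x \<otimes>\<^bsub>G\<^esub> y = y \<otimes>\<^bsub>G\<^esub> x"
  proof (cases "x = y")
    case True then show ?thesis by simp
  next
    case False
    then have "(x,y) \<in> Ind" using p xy unfolding precubic_def by blast
    then show ?thesis by (rule ind_props(6)[OF gs])
  qed
qed

lemma precubic_carrier:
  assumes gs: "gliding_system G Gl Ind" and p: "precubic Gl Ind S"
  shows "S \<subseteq> carrier G" "finite S"
  using p gs_facts(2)[OF gs] unfolding precubic_def by auto

lemma precubic_sub:
  assumes "precubic Gl Ind S" "T \<subseteq> S"
  shows "precubic Gl Ind T"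
  using assms unfolding precubic_def by (meson finite_subset subset_iff)

lemma gprod_insert_pc:
  assumes gs: "gliding_system G Gl Ind" and p: "precubic Gl Ind (insert x T)" and x: "x \<notin> T"
  shows "gprod G (insert x T) = x \<otimes>\<^bsub>G\<^esub> gprod G T"
  using gs_facts(1)[OF gs] _ precubic_carrier(1)[OF gs p] x precubic_commset[OF gs p]
  by (rule gprod_insert') (use precubic_carrier(2)[OF gs p] in simp)

lemma gprod_closed':
  assumes gs: "gliding_system G Gl Ind" and p: "precubic Gl Ind T"
  shows "gprod G T \<in> carrier G"
proof -
  interpret group G by (rule gs_facts(1)[OF gs])
  show ?thesis by (rule gprod_closed) (use precubic_carrier[OF gs p] in auto)
qed

lemma cubic_single:
  assumes gs: "gliding_system G Gl Ind" and reg: "regular_gliding G Gl Ind" and s: "s \<in> Gl"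
  shows "cubic G Gl Ind {s}"
  using reg s unfolding regular_gliding_def precubic_def by simp

lemma based_single:
  assumes gs: "gliding_system G Gl Ind" and reg: "regular_gliding G Gl Ind"
    and A: "A \<in> carrier G" "A \<in> D" and s: "s \<in> Gl" "s \<otimes>\<^bsub>G\<^esub> A \<in> D"
  shows "based_cube_in G Gl Ind D A {s}"
proof -
  interpret group G by (rule gs_facts(1)[OF gs])
  have sc: "s \<in> carrier G" using s gs_facts(2)[OF gs] by auto
  have "gprod G T \<otimes>\<^bsub>G\<^esub> A \<in> D" if "T \<subseteq> {s}" for T
  proof -
    from that have "T = {} \<or> T = {s}" by auto
    then show ?thesis using A s gprod_single[OF gs_facts(1)[OF gs] sc] by (auto simp: gprod_empty)
  qed
  then show ?thesis unfolding based_cube_in_def using A cubic_single[OF gs reg s(1)] by blast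
qed

lemma based_pair:
  assumes gs: "gliding_system G Gl Ind" and reg: "regular_gliding G Gl Ind"
    and A: "A \<in> carrier G" "A \<in> D" and st: "(s,t) \<in> Ind"
    and D: "s \<otimes>\<^bsub>G\<^esub> A \<in> D" "t \<otimes>\<^bsub>G\<^esub> A \<in> D" "s \<otimes>\<^bsub>G\<^esub> t \<otimes>\<^bsub>G\<^esub> A \<in> D"
  shows "based_cube_in G Gl Ind D A {s,t}"
proof -
  interpret group G by (rule gs_facts(1)[OF gs])
  note ip = ind_props[OF gs st]
  have pc: "precubic Gl Ind {s,t}"
    unfolding precubic_def using st ip(2,3,7) by auto
  have cu: "cubic G Gl Ind {s,t}" using reg pc unfolding regular_gliding_def by blast
  have gp: "gprod G {s,t} = s \<otimes>\<^bsub>G\<^esub> t"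
    using gprod_insert_pc[OF gs pc] ip(1) gprod_single[OF gs_facts(1)[OF gs] ip(5)] by simp
  have "gprod G T \<otimes>\<^bsub>G\<^esub> A \<in> D" if "T \<subseteq> {s,t}" for T
  proof -
    from that have "T = {} \<or> T = {s} \<or> T = {t} \<or> T = {s,t}" by auto
    then show ?thesis using A D gp gprod_single[OF gs_facts(1)[OF gs] ip(4)]
        gprod_single[OF gs_facts(1)[OF gs] ip(5)] by (auto simp: gprod_empty)
  qed
  then show ?thesis unfolding based_cube_in_def using A cu by blast
qed

lemma pair_in_link:
  assumes "based_cube_in G Gl Ind D A {s,t}"
  shows "{(A,{s}),(A,{t})} \<in> (\<lambda>(B,S). (\<lambda>s. (B,{s})) ` S) ` link_cells G Gl Ind D A"
  by (rule image_eqI[where x="(A,{s,t})"]) (use assms in \<open>auto simp: link_cells_def\<close>)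


lemma npc_cube:
  assumes gs: "gliding_system G Gl Ind" and reg: "regular_gliding G Gl Ind" and DG: "D \<subseteq> carrier G"
    and npc: "nonpositively_curved G Gl Ind D"
  shows "cube_condition G Gl Ind D"
  unfolding cube_condition_def
proof (intro ballI allI impI)
  interpret group G by (rule gs_facts(1)[OF gs])
  fix A s1 s2 s3
  assume AD: "A \<in> D"
  assume h: "(s1,s2) \<in> Ind \<and> (s1,s3) \<in> Ind \<and> (s2,s3) \<in> Ind \<and>
        s1 \<otimes>\<^bsub>G\<^esub> A \<in> D \<and> s2 \<otimes>\<^bsub>G\<^esub> A \<in> D \<and> s3 \<otimes>\<^bsub>G\<^esub> A \<in> D \<and>
        s1 \<otimes>\<^bsub>G\<^esub> s2 \<otimes>\<^bsub>G\<^esub> A \<in> D \<and> s1 \<otimes>\<^bsub>G\<^esub> s3 \<otimes>\<^bsub>G\<^esub> A \<in> D \<and> s2 \<otimes>\<^bsub>G\<^esub> s3 \<otimes>\<^bsub>G\<^esub> A \<in> D"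
  have A: "A \<in> carrier G" using AD DG by auto
  note i12 = ind_props[OF gs conjunct1[OF h]]
  note i13 = ind_props[OF gs conjunct1[OF conjunct2[OF h]]]
  note i23 = ind_props[OF gs conjunct1[OF conjunct2[OF conjunct2[OF h]]]]
  define L where "L = (\<lambda>(B::'a,S::'a set). (\<lambda>s. (B,{s})) ` S)"
  define C where "C = link_cells G Gl Ind D A"
  define V where "V = link_verts G Gl Ind D A"
  have fl: "simplicial_flag V C L (\<lambda>(B,S). card S)"
    using npc AD unfolding nonpositively_curved_def L_def C_def V_def by blast
  then have flag: "\<And>F. finite F \<Longrightarrow> F \<noteq> {} \<Longrightarrow> F \<subseteq> V \<Longrightarrow> (\<forall>u\<in>F. \<forall>w\<in>F. u \<noteq> w \<longrightarrow> {u,w} \<in> L ` C)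
          \<Longrightarrow> F \<in> L ` C"
    unfolding simplicial_flag_def by blast
  have v1: "(A,{s1}) \<in> V" unfolding V_def link_verts_def
    using based_single[OF gs reg A AD i12(2)] h by blast
  have v2: "(A,{s2}) \<in> V" unfolding V_def link_verts_def
    using based_single[OF gs reg A AD i12(3)] h by blast
  have v3: "(A,{s3}) \<in> V" unfolding V_def link_verts_def
    using based_single[OF gs reg A AD i13(3)] h by blast
  have p12: "{(A,{s1}),(A,{s2})} \<in> L ` C" unfolding L_def C_def
    by (rule pair_in_link, rule based_pair[OF gs reg A AD]) (use h in blast)+
  have p13: "{(A,{s1}),(A,{s3})} \<in> L ` C" unfolding L_def C_def
    by (rule pair_in_link, rule based_pair[OF gs reg A AD]) (use h in blast)+
  have p23: "{(A,{s2}),(A,{s3})} \<in> L ` C" unfolding L_def C_def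
    by (rule pair_in_link, rule based_pair[OF gs reg A AD]) (use h in blast)+
  define F where "F = {(A,{s1}),(A,{s2}),(A,{s3})}"
  have pw: "\<forall>u\<in>F. \<forall>w\<in>F. u \<noteq> w \<longrightarrow> {u,w} \<in> L ` C"
    unfolding F_def using p12 p13 p23 by (auto simp: insert_commute)
  have "F \<in> L ` C" by (rule flag) (use v1 v2 v3 pw in \<open>auto simp: F_def\<close>)
  then obtain c where c: "c \<in> C" "L c = F" by blast
  then obtain S where cS: "c = (A,S)" "based_cube_in G Gl Ind D A S"
    unfolding C_def link_cells_def by blast
  have "S = {s1,s2,s3}"
  proof -
    have "x \<in> S \<longleftrightarrow> (A,{x}) \<in> L c" for x unfolding L_def cS(1) by auto
    then have "x \<in> S \<longleftrightarrow> x \<in> {s1,s2,s3}" for x using c(2) unfolding F_def by auto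
    then show ?thesis by blast
  qed
  then have inD: "gprod G {s1,s2,s3} \<otimes>\<^bsub>G\<^esub> A \<in> D" using cS(2) unfolding based_cube_in_def by blast
  have pc: "precubic Gl Ind {s1,s2,s3}"
    unfolding precubic_def using h i12 i13 i23 by auto
  have "gprod G {s1,s2,s3} = s1 \<otimes>\<^bsub>G\<^esub> gprod G {s2,s3}"
    by (rule gprod_insert_pc[OF gs pc]) (use i12(1) i13(1) in simp)
  also have "gprod G {s2,s3} = s2 \<otimes>\<^bsub>G\<^esub> gprod G {s3}"
    by (rule gprod_insert_pc[OF gs precubic_sub[OF pc]]) (use i23(1) in auto)
  also have "gprod G {s3} = s3" by (rule gprod_single[OF gs_facts(1)[OF gs] i13(5)])
  finally have "gprod G {s1,s2,s3} = s1 \<otimes>\<^bsub>G\<^esub> (s2 \<otimes>\<^bsub>G\<^esub> s3)" .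
  then show "s1 \<otimes>\<^bsub>G\<^esub> s2 \<otimes>\<^bsub>G\<^esub> s3 \<otimes>\<^bsub>G\<^esub> A \<in> D"
    using inD i12(4,5) i13(5) A by (simp add: m_assoc)
qed


lemma fill_cube:
  assumes gs: "gliding_system G Gl Ind" and cc: "cube_condition G Gl Ind D"
    and AD: "A \<in> D" and A: "A \<in> carrier G" and pc: "precubic Gl Ind S"
    and sing: "\<And>s. s \<in> S \<Longrightarrow> s \<otimes>\<^bsub>G\<^esub> A \<in> D"
    and pair: "\<And>s t. s \<in> S \<Longrightarrow> t \<in> S \<Longrightarrow> s \<noteq> t \<Longrightarrow> s \<otimes>\<^bsub>G\<^esub> t \<otimes>\<^bsub>G\<^esub> A \<in> D"
  shows "T \<subseteq> S \<Longrightarrow> gprod G T \<otimes>\<^bsub>G\<^esub> A \<in> D"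
proof (induction "card T" arbitrary: T rule: less_induct)
  case less
  interpret group G by (rule gs_facts(1)[OF gs])
  have fS: "finite S" and SG: "S \<subseteq> carrier G" using precubic_carrier[OF gs pc] by auto
  have fT: "finite T" using less.prems fS finite_subset by blast
  have pcT: "precubic Gl Ind T" using precubic_sub[OF pc less.prems] .
  consider "card T = 0" | "card T = 1" | "card T = 2" | "card T \<ge> 3" by linarith
  then show ?case
  proof cases
    case 1
    then have "T = {}" using fT by simp
    then show ?thesis using AD A by (simp add: gprod_empty)
  next
    case 2
    then obtain s where "T = {s}" by (rule card_1_singletonE)
    then show ?thesis using sing less.prems SG gprod_single[OF gs_facts(1)[OF gs]] by auto
  next
    case 3
    then obtain s t where st: "T = {s,t}" "s \<noteq> t" by (meson card_2_iff)
    have sc: "s \<in> S" "t \<in> S" using st less.prems by auto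
    have "gprod G {s,t} = s \<otimes>\<^bsub>G\<^esub> gprod G {t}"
      by (rule gprod_insert_pc[OF gs]) (use pcT st in auto)
    also have "gprod G {t} = t" using gprod_single[OF gs_facts(1)[OF gs]] sc SG by auto
    finally show ?thesis using pair[OF sc st(2)] st sc SG A by (simp add: m_assoc)
  next
    case 4
    have "T \<noteq> {}" using 4 by auto
    then obtain s1 where s1: "s1 \<in> T" by blast
    have "card (T - {s1}) \<ge> 2" using 4 s1 fT by simp
    then have "T - {s1} \<noteq> {}" by (metis card.empty not_numeral_le_zero)
    then obtain s2 where s2: "s2 \<in> T - {s1}" by blast
    have "card (T - {s1} - {s2}) \<ge> 1" using 4 s1 s2 fT by (simp add: card_Diff_singleton)
    then have "T - {s1} - {s2} \<noteq> {}" by (metis card.empty not_one_le_zero)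
    then obtain s3 where s3: "s3 \<in> T - {s1} - {s2}" by blast
    define T' where "T' = T - {s1,s2,s3}"
    have fT': "finite T'" using fT T'_def by simp
    have cT': "card T' < card T" unfolding T'_def using s1 fT by (intro psubset_card_mono) auto
    have ne: "s1 \<noteq> s2" "s1 \<noteq> s3" "s2 \<noteq> s3" using s2 s3 by auto
    have nin: "s1 \<notin> T'" "s2 \<notin> T'" "s3 \<notin> T'" unfolding T'_def by auto
    have Teq: "T = insert s1 (insert s2 (insert s3 T'))" unfolding T'_def using s1 s2 s3 by auto
    have inS: "s1 \<in> S" "s2 \<in> S" "s3 \<in> S" using s1 s2 s3 less.prems by auto
    have T'S: "T' \<subseteq> S" using less.prems T'_def by auto
    have car: "s1 \<in> carrier G" "s2 \<in> carrier G" "s3 \<in> carrier G" using inS SG by auto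
    have ind: "(s1,s2) \<in> Ind" "(s1,s3) \<in> Ind" "(s2,s3) \<in> Ind"
      using pc inS ne unfolding precubic_def by auto
    define g where "g = gprod G T'"
    have gc: "g \<in> carrier G" unfolding g_def
      by (rule gprod_closed'[OF gs precubic_sub[OF pc T'S]])
    have IH: "gprod G U \<otimes>\<^bsub>G\<^esub> A \<in> D" if "U \<subseteq> T" "U \<noteq> T" for U
    proof -
      have "card U < card T" using that fT by (meson psubsetI psubset_card_mono)
      then show ?thesis using less.hyps that less.prems by blast
    qed
    have ins: "gprod G (insert x U) = x \<otimes>\<^bsub>G\<^esub> gprod G U" if "insert x U \<subseteq> T" "x \<notin> U" for x U
      by (rule gprod_insert_pc[OF gs precubic_sub[OF pcT that(1)] that(2)])
    have B: "g \<otimes>\<^bsub>G\<^esub> A \<in> D" unfolding g_def by (rule IH) (use Teq nin in auto)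
    have B1: "s1 \<otimes>\<^bsub>G\<^esub> (g \<otimes>\<^bsub>G\<^esub> A) \<in> D"
    proof -
      have "gprod G (insert s1 T') \<otimes>\<^bsub>G\<^esub> A \<in> D" by (rule IH) (use Teq nin ne in auto)
      moreover have "gprod G (insert s1 T') = s1 \<otimes>\<^bsub>G\<^esub> g" unfolding g_def
        by (rule ins) (use Teq nin in auto)
      ultimately show ?thesis using car gc A by (simp add: m_assoc)
    qed
    have B2: "s2 \<otimes>\<^bsub>G\<^esub> (g \<otimes>\<^bsub>G\<^esub> A) \<in> D"
    proof -
      have "gprod G (insert s2 T') \<otimes>\<^bsub>G\<^esub> A \<in> D" by (rule IH) (use Teq nin ne in auto)
      moreover have "gprod G (insert s2 T') = s2 \<otimes>\<^bsub>G\<^esub> g" unfolding g_def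
        by (rule ins) (use Teq nin in auto)
      ultimately show ?thesis using car gc A by (simp add: m_assoc)
    qed
    have B3: "s3 \<otimes>\<^bsub>G\<^esub> (g \<otimes>\<^bsub>G\<^esub> A) \<in> D"
    proof -
      have "gprod G (insert s3 T') \<otimes>\<^bsub>G\<^esub> A \<in> D" by (rule IH) (use Teq nin ne in auto)
      moreover have "gprod G (insert s3 T') = s3 \<otimes>\<^bsub>G\<^esub> g" unfolding g_def
        by (rule ins) (use Teq nin in auto)
      ultimately show ?thesis using car gc A by (simp add: m_assoc)
    qed
    have B12: "s1 \<otimes>\<^bsub>G\<^esub> s2 \<otimes>\<^bsub>G\<^esub> (g \<otimes>\<^bsub>G\<^esub> A) \<in> D"
    proof -
      have "gprod G (insert s1 (insert s2 T')) \<otimes>\<^bsub>G\<^esub> A \<in> D" by (rule IH) (use Teq nin ne in auto)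
      moreover have "gprod G (insert s1 (insert s2 T')) = s1 \<otimes>\<^bsub>G\<^esub> gprod G (insert s2 T')"
        by (rule ins) (use Teq nin ne in auto)
      moreover have "gprod G (insert s2 T') = s2 \<otimes>\<^bsub>G\<^esub> g" unfolding g_def
        by (rule ins) (use Teq nin in auto)
      ultimately show ?thesis using car gc A by (simp add: m_assoc)
    qed
    have B13: "s1 \<otimes>\<^bsub>G\<^esub> s3 \<otimes>\<^bsub>G\<^esub> (g \<otimes>\<^bsub>G\<^esub> A) \<in> D"
    proof -
      have "gprod G (insert s1 (insert s3 T')) \<otimes>\<^bsub>G\<^esub> A \<in> D" by (rule IH) (use Teq nin ne in auto)
      moreover have "gprod G (insert s1 (insert s3 T')) = s1 \<otimes>\<^bsub>G\<^esub> gprod G (insert s3 T')"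
        by (rule ins) (use Teq nin ne in auto)
      moreover have "gprod G (insert s3 T') = s3 \<otimes>\<^bsub>G\<^esub> g" unfolding g_def
        by (rule ins) (use Teq nin in auto)
      ultimately show ?thesis using car gc A by (simp add: m_assoc)
    qed
    have B23: "s2 \<otimes>\<^bsub>G\<^esub> s3 \<otimes>\<^bsub>G\<^esub> (g \<otimes>\<^bsub>G\<^esub> A) \<in> D"
    proof -
      have "gprod G (insert s2 (insert s3 T')) \<otimes>\<^bsub>G\<^esub> A \<in> D" by (rule IH) (use Teq nin ne in auto)
      moreover have "gprod G (insert s2 (insert s3 T')) = s2 \<otimes>\<^bsub>G\<^esub> gprod G (insert s3 T')"
        by (rule ins) (use Teq nin ne in auto)
      moreover have "gprod G (insert s3 T') = s3 \<otimes>\<^bsub>G\<^esub> g" unfolding g_def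
        by (rule ins) (use Teq nin in auto)
      ultimately show ?thesis using car gc A by (simp add: m_assoc)
    qed
    have "s1 \<otimes>\<^bsub>G\<^esub> s2 \<otimes>\<^bsub>G\<^esub> s3 \<otimes>\<^bsub>G\<^esub> (g \<otimes>\<^bsub>G\<^esub> A) \<in> D"
      using cc B ind B1 B2 B3 B12 B13 B23 unfolding cube_condition_def by blast
    moreover have "gprod G T = s1 \<otimes>\<^bsub>G\<^esub> gprod G (insert s2 (insert s3 T'))"
      unfolding Teq by (rule ins) (use Teq nin ne in auto)
    moreover have "gprod G (insert s2 (insert s3 T')) = s2 \<otimes>\<^bsub>G\<^esub> gprod G (insert s3 T')"
      by (rule ins) (use Teq nin ne in auto)
    moreover have "gprod G (insert s3 T') = s3 \<otimes>\<^bsub>G\<^esub> g" unfolding g_def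
      by (rule ins) (use Teq nin in auto)
    ultimately show ?thesis using car gc A by (simp add: m_assoc)
  qed
qed


lemma cube_npc:
  assumes gs: "gliding_system G Gl Ind" and reg: "regular_gliding G Gl Ind" and DG: "D \<subseteq> carrier G"
    and cc: "cube_condition G Gl Ind D"
  shows "nonpositively_curved G Gl Ind D"
  unfolding nonpositively_curved_def
proof (intro ballI)
  interpret group G by (rule gs_facts(1)[OF gs])
  fix A assume AD: "A \<in> D"
  have A: "A \<in> carrier G" using AD DG by auto
  define L where "L = (\<lambda>(B::'a,S::'a set). (\<lambda>s. (B,{s})) ` S)"
  define C where "C = link_cells G Gl Ind D A"
  define V where "V = link_verts G Gl Ind D A"
  have Lc: "L (A,S) = (\<lambda>s. (A,{s})) ` S" for S unfolding L_def by simp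
  have injs: "inj_on (\<lambda>s. (A,{s})) X" for X by (rule inj_onI) auto
  have memL: "(A,{x}) \<in> L (A,S) \<longleftrightarrow> x \<in> S" for x S unfolding Lc by auto
  have Cform: "c \<in> C \<Longrightarrow> \<exists>S. c = (A,S) \<and> S \<noteq> {} \<and> based_cube_in G Gl Ind D A S" for c
    unfolding C_def link_cells_def by blast
  have Vform: "v \<in> V \<longleftrightarrow> (\<exists>s. v = (A,{s}) \<and> based_cube_in G Gl Ind D A {s})" for v
    unfolding V_def link_verts_def by blast
  have single_of: "s \<in> Gl \<and> s \<otimes>\<^bsub>G\<^esub> A \<in> D" if "based_cube_in G Gl Ind D A {s}" for s
  proof -
    have "cubic G Gl Ind {s}" using that unfolding based_cube_in_def by blast
    then have "s \<in> Gl" unfolding cubic_def precubic_def by blast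
    moreover have "gprod G {s} \<otimes>\<^bsub>G\<^esub> A \<in> D" using that unfolding based_cube_in_def by blast
    moreover have "s \<in> carrier G" using \<open>s \<in> Gl\<close> gs_facts(2)[OF gs] by auto
    ultimately show ?thesis using gprod_single[OF gs_facts(1)[OF gs]] by simp
  qed
  have "inj_on L C"
  proof (rule inj_onI)
    fix c1 c2 assume c: "c1 \<in> C" "c2 \<in> C" "L c1 = L c2"
    obtain S1 where S1: "c1 = (A,S1)" using Cform[OF c(1)] by blast
    obtain S2 where S2: "c2 = (A,S2)" using Cform[OF c(2)] by blast
    have "x \<in> S1 \<longleftrightarrow> x \<in> S2" for x using memL[of x S1] memL[of x S2] c(3) S1 S2 by simp
    then show "c1 = c2" using S1 S2 by blast
  qed
  moreover have "\<forall>c\<in>C. L c \<subseteq> V \<and> card (L c) = (\<lambda>(B,S). card S) c"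
  proof
    fix c assume c: "c \<in> C"
    then obtain S where S: "c = (A,S)" "based_cube_in G Gl Ind D A S" using Cform by blast
    have pcS: "precubic Gl Ind S" using S(2) unfolding based_cube_in_def cubic_def by blast
    have "(A,{s}) \<in> V" if "s \<in> S" for s
    proof -
      have "s \<in> Gl" using pcS that unfolding precubic_def by blast
      moreover have "gprod G {s} \<otimes>\<^bsub>G\<^esub> A \<in> D" using S(2) that unfolding based_cube_in_def by blast
      moreover have "s \<in> carrier G" using \<open>s \<in> Gl\<close> gs_facts(2)[OF gs] by auto
      ultimately have "based_cube_in G Gl Ind D A {s}"
        using based_single[OF gs reg A AD] gprod_single[OF gs_facts(1)[OF gs]] by simp
      then show ?thesis unfolding Vform by blast
    qed
    then have "L c \<subseteq> V" unfolding S(1) Lc by blast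
    moreover have "card (L c) = card S" unfolding S(1) Lc by (rule card_image[OF injs])
    ultimately show "L c \<subseteq> V \<and> card (L c) = (\<lambda>(B,S). card S) c" using S(1) by simp
  qed
  moreover have "\<forall>F. finite F \<and> F \<noteq> {} \<and> F \<subseteq> V \<and> (\<forall>u\<in>F. \<forall>w\<in>F. u \<noteq> w \<longrightarrow> {u,w} \<in> L ` C)
          \<longrightarrow> F \<in> L ` C"
  proof (intro allI impI)
    fix F assume F0: "finite F \<and> F \<noteq> {} \<and> F \<subseteq> V \<and> (\<forall>u\<in>F. \<forall>w\<in>F. u \<noteq> w \<longrightarrow> {u,w} \<in> L ` C)"
    have F: "finite F" "F \<noteq> {}" "F \<subseteq> V" "\<And>u w. u \<in> F \<Longrightarrow> w \<in> F \<Longrightarrow> u \<noteq> w \<Longrightarrow> {u,w} \<in> L ` C"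
      using F0 by blast+
    define S where "S = {s. (A,{s}) \<in> F}"
    have Feq: "F = (\<lambda>s. (A,{s})) ` S"
    proof
      show "F \<subseteq> (\<lambda>s. (A,{s})) ` S"
      proof
        fix v assume "v \<in> F"
        then have "v \<in> V" using F(3) by blast
        then obtain s where "v = (A,{s})" unfolding Vform by blast
        then show "v \<in> (\<lambda>s. (A,{s})) ` S" using \<open>v \<in> F\<close> S_def by blast
      qed
      show "(\<lambda>s. (A,{s})) ` S \<subseteq> F" unfolding S_def by blast
    qed
    have fS: "finite S" using F(1) Feq finite_image_iff[OF injs[of S]] by simp
    have neS: "S \<noteq> {}" using F(2) Feq by blast
    have sS: "based_cube_in G Gl Ind D A {s}" if "s \<in> S" for s
    proof -
      have "(A,{s}) \<in> V" using that F(3) S_def by blast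
      then show ?thesis unfolding Vform by auto
    qed
    have pS: "based_cube_in G Gl Ind D A {s,t}" if "s \<in> S" "t \<in> S" "s \<noteq> t" for s t
    proof -
      have "{(A,{s}),(A,{t})} \<in> L ` C" using F(4) that S_def by simp
      then obtain c where c: "c \<in> C" "L c = {(A,{s}),(A,{t})}" by blast
      then obtain S' where S': "c = (A,S')" "based_cube_in G Gl Ind D A S'" using Cform by blast
      have "x \<in> S' \<longleftrightarrow> x \<in> {s,t}" for x using memL[of x S'] c(2) S'(1) by auto
      then have "S' = {s,t}" by blast
      then show ?thesis using S'(2) by simp
    qed
    have pcS: "precubic Gl Ind S"
      unfolding precubic_def
    proof (intro conjI ballI impI)
      show "finite S" by (rule fS)
      show "S \<subseteq> Gl" using sS single_of by blast
      fix s t assume st: "s \<in> S" "t \<in> S" "s \<noteq> t"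
      have "cubic G Gl Ind {s,t}" using pS[OF st] unfolding based_cube_in_def by blast
      then show "(s,t) \<in> Ind" using st(3) unfolding cubic_def precubic_def by blast
    qed
    have cuS: "cubic G Gl Ind S" using reg pcS unfolding regular_gliding_def by blast
    have SG: "S \<subseteq> carrier G" using precubic_carrier[OF gs pcS] by blast
    have all: "gprod G T \<otimes>\<^bsub>G\<^esub> A \<in> D" if "T \<subseteq> S" for T
    proof (rule fill_cube[OF gs cc AD A pcS _ _ that])
      fix s assume "s \<in> S" then show "s \<otimes>\<^bsub>G\<^esub> A \<in> D" using sS single_of by blast
    next
      fix s t assume st: "s \<in> S" "t \<in> S" "s \<noteq> t"
      have b: "based_cube_in G Gl Ind D A {s,t}" by (rule pS[OF st])
      then have pc2: "precubic Gl Ind {s,t}" unfolding based_cube_in_def cubic_def by blast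
      have "gprod G {s,t} = s \<otimes>\<^bsub>G\<^esub> gprod G {t}"
        by (rule gprod_insert_pc[OF gs pc2]) (use st in simp)
      also have "gprod G {t} = t" using gprod_single[OF gs_facts(1)[OF gs]] st SG by auto
      finally have "gprod G {s,t} = s \<otimes>\<^bsub>G\<^esub> t" .
      moreover have "gprod G {s,t} \<otimes>\<^bsub>G\<^esub> A \<in> D" using b unfolding based_cube_in_def by blast
      ultimately show "s \<otimes>\<^bsub>G\<^esub> t \<otimes>\<^bsub>G\<^esub> A \<in> D" by simp
    qed
    have "(A,S) \<in> C" unfolding C_def link_cells_def based_cube_in_def using A cuS neS all by blast
    moreover have "F = L (A,S)" using Feq Lc by simp
    ultimately show "F \<in> L ` C" by blast
  qed
  ultimately have "simplicial_flag V C L (\<lambda>(B,S). card S)" unfolding simplicial_flag_def by blast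
  then show "simplicial_flag (link_verts G Gl Ind D A) (link_cells G Gl Ind D A)
               (\<lambda>(B,S). (\<lambda>s. (B,{s})) ` S) (\<lambda>(B,S). card S)"
    unfolding V_def C_def L_def .
qed

theorem corollary4p5:
  fixes G :: "('a,'b) monoid_scheme" and Gl :: "'a set" and Ind :: "('a \<times> 'a) set" and D :: "'a set"
  assumes "gliding_system G Gl Ind" and "regular_gliding G Gl Ind" and "D \<subseteq> carrier G"
  shows "(nonpositively_curved G Gl Ind D \<longleftrightarrow> cube_condition G Gl Ind D)
         \<and> nonpositively_curved G Gl Ind (carrier G)"
proof
  show "nonpositively_curved G Gl Ind D \<longleftrightarrow> cube_condition G Gl Ind D"
    using npc_cube[OF assms] cube_npc[OF assms] by blast
  interpret group G by (rule gs_facts(1)[OF assms(1)])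
  have "cube_condition G Gl Ind (carrier G)"
    unfolding cube_condition_def
  proof (intro ballI allI impI)
    fix A s1 s2 s3
    assume "A \<in> carrier G" and h: "(s1,s2) \<in> Ind \<and> (s1,s3) \<in> Ind \<and> (s2,s3) \<in> Ind \<and>
        s1 \<otimes>\<^bsub>G\<^esub> A \<in> carrier G \<and> s2 \<otimes>\<^bsub>G\<^esub> A \<in> carrier G \<and> s3 \<otimes>\<^bsub>G\<^esub> A \<in> carrier G \<and>
        s1 \<otimes>\<^bsub>G\<^esub> s2 \<otimes>\<^bsub>G\<^esub> A \<in> carrier G \<and> s1 \<otimes>\<^bsub>G\<^esub> s3 \<otimes>\<^bsub>G\<^esub> A \<in> carrier G \<and> s2 \<otimes>\<^bsub>G\<^esub> s3 \<otimes>\<^bsub>G\<^esub> A \<in> carrier G"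
    have "s1 \<in> carrier G" "s2 \<in> carrier G" "s3 \<in> carrier G"
      using ind_props(4,5)[OF assms(1)] h by blast+
    then show "s1 \<otimes>\<^bsub>G\<^esub> s2 \<otimes>\<^bsub>G\<^esub> s3 \<otimes>\<^bsub>G\<^esub> A \<in> carrier G" using \<open>A \<in> carrier G\<close> by simp
  qed
  then show "nonpositively_curved G Gl Ind (carrier G)"
    using cube_npc[OF assms(1,2) subset_refl] by blast
qed

end
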